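(* Let $\mathcal{D}\subset\mathbb{R}^d$ be bounded with non-empty interior $\mathcal{D}^\circ$, and let $\mathcal{C}\subset\Gamma\backslash G\times\mathcal{D}^\circ$ be compact. Then there exists $\kappa(\mathcal{C})>0$ such that (i) $F(M,t)<\kappa(\mathcal{C})$ whenever $(\Gamma M,t)\in\mathcal{C}$, and (ii) $F$ is continuous at every $(\Gamma M,t)\in\mathcal{C}$ satisfying \[(\mathbb{Z}^{d+1}M\setminus\{0\})\cap\partial\big((\mathcal{D}-t)\times[0,\kappa(\mathcal{C})]\big)=\emptyset .\]
   Context: Let $G=\operatorname{SL}(d+1,\mathbb{R})$ and $\Gamma=\operatorname{SL}(d+1,\mathbb{Z})$; vectors are row vectors, and $\mathbb{Z}^{d+1}M$ is the lattice spanned by the rows of $M$. For $M\in G$ and $t\in\mathcal{D}$, $F(M,t)=\min\{y>0\mid (x,y)\in\mathbb{Z}^{d+1}M,\ x+t\in\mathcal{D}\}$ (with $x\in\mathbb{R}^d$, $y\in\mathbb{R}$), and $F(M,t)=\infty$ if no minimum exists; $F(M,t)$ depends only on $\Gamma M$, so $F$ is a function on $\Gamma\backslash G\times\mathcal{D}^\circ$. $\mathcal{D}-t=\{x-t\mid x\in\mathcal{D}\}$. *)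

theory Defs
  imports "HOL-Analysis.Analysis"
begin

text \<open>Dimension d is the cardinality of the finite type 'n; indices of R^(d+1) are
  'n option, with the coordinate None playing the role of the last coordinate y.
  Vectors are row vectors; the lattice Z^(d+1) M is the set of v v* M with v integral.\<close>

type_synonym 'n mat1 = "real ^ 'n option ^ 'n option"

definition SLR :: "'n::finite mat1 set" where
  "SLR = {M. det M = 1}"

definition SLZ :: "'n::finite mat1 set" where
  "SLZ = {M. det M = 1 \<and> (\<forall>i j. M $ i $ j \<in> \<int>)}"

definition int_vecs :: "(real ^ 'n::finite option) set" where
  "int_vecs = {v. \<forall>i. v $ i \<in> \<int>}"

definition split_vec :: "real ^ 'n::finite option \<Rightarrow> (real ^ 'n) \<times> real" where
  "split_vec w = ((\<chi> i. w $ Some i), w $ None)"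

definition lattice :: "'n::finite mat1 \<Rightarrow> ((real ^ 'n) \<times> real) set" where
  "lattice M = {split_vec (v v* M) | v. v \<in> int_vecs}"

definition Ffun :: "(real ^ 'n::finite) set \<Rightarrow> 'n mat1 \<Rightarrow> real ^ 'n \<Rightarrow> ereal" where
  "Ffun D M t =
    (let S = {y. y > 0 \<and> (\<exists>x. (x, y) \<in> lattice M \<and> x + t \<in> D)}
     in if (\<exists>y\<in>S. \<forall>z\<in>S. y \<le> z) then ereal (THE y. y \<in> S \<and> (\<forall>z\<in>S. y \<le> z)) else \<infinity>)"

definition coset :: "'n::finite mat1 \<Rightarrow> 'n mat1 set" where
  "coset M = {g ** M | g. g \<in> SLZ}"

definition cosets :: "'n::finite mat1 set set" where
  "cosets = coset ` SLR"

definition quot_top :: "'n::finite mat1 set topology" where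
  "quot_top = topology (\<lambda>U. U \<subseteq> cosets \<and> openin (top_of_set SLR) {M \<in> SLR. coset M \<in> U})"

text \<open>The function F on Gamma\G x D, via any representative (well defined).\<close>
definition Fq :: "(real ^ 'n::finite) set \<Rightarrow> ('n mat1 set) \<times> (real ^ 'n) \<Rightarrow> ereal" where
  "Fq D p = Ffun D (SOME M. M \<in> fst p) (snd p)"

definition continuous_at_pt :: "'a topology \<Rightarrow> ('a \<Rightarrow> ereal) \<Rightarrow> 'a \<Rightarrow> bool" where
  "continuous_at_pt X f p \<longleftrightarrow>
     (\<forall>V. open V \<and> f p \<in> V \<longrightarrow> (\<exists>U. openin X U \<and> p \<in> U \<and> (\<forall>q\<in>U. f q \<in> V)))"

end

theory Submission
  imports Defs
begin


lemma det_Ints: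
  fixes A :: "real^'m::finite^'m"
  assumes "\<forall>i j. A$i$j \<in> \<int>"
  shows "det A \<in> \<int>"
  unfolding det_def
  by (intro Ints_sum Ints_mult Ints_prod) (auto simp: assms)

lemma mat1_SLZ: "(mat 1 :: 'n::finite mat1) \<in> SLZ"
  by (simp add: SLZ_def) (simp add: mat_def)

lemma SLZ_mult: "g \<in> SLZ \<Longrightarrow> h \<in> SLZ \<Longrightarrow> g ** h \<in> SLZ"
  unfolding SLZ_def by (auto simp: det_mul) (auto simp: matrix_matrix_mult_def intro!: Ints_sum Ints_mult)

lemma SLZ_inv:
  fixes g :: "'n::finite mat1"
  assumes "g \<in> SLZ"
  obtains h where "h \<in> SLZ" "h ** g = mat 1" "g ** h = mat 1"
proof -
  have d: "det g = 1" and gi: "\<forall>i j. g$i$j \<in> \<int>" using assms by (auto simp: SLZ_def)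
  then obtain B where B: "g ** B = mat 1" "B ** g = mat 1"
    using invertible_det_nz[of g] unfolding invertible_def by auto
  have "B$k$j \<in> \<int>" for k j
  proof -
    define x where "x = (\<chi> k. B$k$j)"
    define b where "b = (\<chi> i. (mat 1 :: 'n mat1)$i$j)"
    have "g *v x = b" unfolding vec_eq_iff
    proof
      fix i
      have "(g *v x)$i = (g ** B)$i$j" by (simp add: x_def matrix_vector_mult_def matrix_matrix_mult_def)
      thus "(g *v x)$i = b$i" using B(1) by (simp add: b_def)
    qed
    hence "x = (\<chi> k. det(\<chi> i j. if j=k then b$i else g$i$j) / det g)"
      using cramer[of g x b] d by simp
    hence "B$k$j = det(\<chi> i l. if l=k then b$i else g$i$l)"
      using d unfolding x_def by (simp add: vec_eq_iff)
    also have "\<dots> \<in> \<int>"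
      by (rule det_Ints) (auto simp: gi b_def mat_def)
    finally show ?thesis .
  qed
  moreover have "det B = 1"
    using B d det_mul[of g B] by simp
  ultimately have "B \<in> SLZ" by (auto simp: SLZ_def)
  with B show ?thesis using that by blast
qed

lemma int_vecs_mult: "v \<in> int_vecs \<Longrightarrow> g \<in> SLZ \<Longrightarrow> v v* g \<in> int_vecs"
  by (auto simp: int_vecs_def SLZ_def vector_matrix_mult_def intro!: Ints_sum Ints_mult)

lemma lattice_mult:
  assumes "g \<in> SLZ" shows "lattice (g ** M) = lattice M"
proof -
  obtain h where h: "h \<in> SLZ" "h ** g = mat 1" "g ** h = mat 1" using SLZ_inv assms by blast
  show ?thesis unfolding lattice_def
  proof (intro set_eqI iffI)
    fix z assume "z \<in> {split_vec (v v* (g ** M)) |v. v \<in> int_vecs}"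
    then obtain v where "v \<in> int_vecs" "z = split_vec (v v* (g ** M))" by auto
    thus "z \<in> {split_vec (v v* M) |v. v \<in> int_vecs}"
      using int_vecs_mult[OF _ assms] by (auto simp flip: vector_matrix_mul_assoc)
  next
    fix z assume "z \<in> {split_vec (v v* M) |v. v \<in> int_vecs}"
    then obtain v where v: "v \<in> int_vecs" "z = split_vec (v v* M)" by auto
    have "v v* M = (v v* h) v* (g ** M)"
      by (simp add: vector_matrix_mul_assoc matrix_mul_assoc h)
    thus "z \<in> {split_vec (v v* (g ** M)) |v. v \<in> int_vecs}"
      using int_vecs_mult[OF v(1) h(1)] v by auto
  qed
qed

lemma coset_self: "M \<in> coset M"
  unfolding coset_def using mat1_SLZ by force

lemma coset_mem: assumes "N \<in> coset M" shows "coset N = coset M"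
proof -
  obtain g where g: "g \<in> SLZ" "N = g ** M" using assms by (auto simp: coset_def)
  obtain h where h: "h \<in> SLZ" "h ** g = mat 1" "g ** h = mat 1" using SLZ_inv g(1) by blast
  show ?thesis unfolding coset_def
  proof (intro set_eqI iffI)
    fix z assume "z \<in> {k ** N |k. k \<in> SLZ}"
    then obtain k where "k \<in> SLZ" "z = k ** N" by auto
    thus "z \<in> {k ** M |k. k \<in> SLZ}" using g SLZ_mult[of k g]
      by (auto simp: matrix_mul_assoc)
  next
    fix z assume "z \<in> {k ** M |k. k \<in> SLZ}"
    then obtain k where k: "k \<in> SLZ" "z = k ** M" by auto
    have "z = k ** ((h ** g) ** M)" using k h by simp
    also have "\<dots> = (k ** h) ** N" using g by (simp add: matrix_mul_assoc)
    finally have "z = (k ** h) ** N" .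
    thus "z \<in> {k ** N |k. k \<in> SLZ}" using SLZ_mult[OF k(1) h(1)] by auto
  qed
qed

lemma lattice_coset: "N \<in> coset M \<Longrightarrow> lattice N = lattice M"
  by (auto simp: coset_def lattice_mult)

lemma lattice_coset_eq: "coset N = coset M \<Longrightarrow> lattice N = lattice M"
  by (metis coset_self lattice_coset)

lemma Ffun_lattice: "lattice N = lattice M \<Longrightarrow> Ffun D N t = Ffun D M t"
  unfolding Ffun_def by simp

lemma Fq_coset: "Fq D (coset M, t) = Ffun D M t"
proof -
  have "(SOME N. N \<in> coset M) \<in> coset M" using coset_self by (metis someI)
  hence "lattice (SOME N. N \<in> coset M) = lattice M" by (rule lattice_coset)
  thus ?thesis unfolding Fq_def fst_conv snd_conv by (rule Ffun_lattice)
qed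

lemma SLR_coset: assumes "M \<in> SLR" "N \<in> coset M" shows "N \<in> SLR"
proof -
  obtain g where g: "g \<in> SLZ" "N = g ** M" using assms(2) by (auto simp: coset_def)
  have "det N = det g * det M" using g(2) det_mul by simp
  thus ?thesis using g(1) assms(1) by (simp add: SLZ_def SLR_def)
qed



lemma quot_top_istop:
  "istopology (\<lambda>U. U \<subseteq> (cosets :: 'n::finite mat1 set set) \<and> openin (top_of_set SLR) {M \<in> SLR. coset M \<in> U})"
proof -
  define P where "P = (\<lambda>U. U \<subseteq> (cosets :: 'n::finite mat1 set set) \<and> openin (top_of_set SLR) {M \<in> SLR. coset M \<in> U})"
  have 1: "P (S \<inter> T)" if S: "P S" and T: "P T" for S T
  proof -
    have "{M \<in> SLR. coset M \<in> S \<inter> T} = {M \<in> SLR. coset M \<in> S} \<inter> {M \<in> SLR. coset M \<in> T}" by auto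
    thus ?thesis using S T unfolding P_def by (auto intro: openin_Int)
  qed
  have 2: "P (\<Union>K)" if K: "\<forall>S\<in>K. P S" for K
  proof -
    have "{M \<in> SLR. coset M \<in> \<Union>K} = (\<Union>S\<in>K. {M \<in> SLR. coset M \<in> S})" by auto
    thus ?thesis using K unfolding P_def by (auto intro!: openin_Union)
  qed
  have "istopology P" unfolding istopology_def using 1 2 by blast
  thus ?thesis unfolding P_def .
qed

lemma openin_quot_top:
  "openin quot_top U \<longleftrightarrow> U \<subseteq> cosets \<and> openin (top_of_set SLR) {M \<in> SLR. coset M \<in> U}"
  by (simp only: quot_top_def topology_inverse'[OF quot_top_istop])

lemma linear_lmul: "linear (\<lambda>X::'n::finite mat1. h ** X)"
  by (rule linearI) (simp_all add: matrix_add_ldistrib matrix_matrix_mult_def vec_eq_iff sum_distrib_left algebra_simps sum.distrib)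

lemma open_preim_lmul: "open A \<Longrightarrow> open {X::'n::finite mat1. h ** X \<in> A}"
proof -
  assume "open A"
  have "\<And>x. continuous (at x) (\<lambda>X::'n mat1. h ** X)"
    using linear_lmul linear_continuous_at linear_conv_bounded_linear by blast
  from continuous_open_vimage[OF \<open>open A\<close> this] show ?thesis by (simp add: vimage_def)
qed

lemma openin_quot_image:
  fixes A :: "'n::finite mat1 set"
  assumes "open A"
  shows "openin quot_top (coset ` (A \<inter> SLR))"
  unfolding openin_quot_top
proof
  show "coset ` (A \<inter> SLR) \<subseteq> cosets" by (auto simp: cosets_def)
  define T where "T = (\<Union>h\<in>SLZ. {X::'n mat1. h ** X \<in> A})"
  have "open T" unfolding T_def using open_preim_lmul[OF assms] by blast
  have "{M \<in> SLR. coset M \<in> coset ` (A \<inter> SLR)} = SLR \<inter> T"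
  proof (intro set_eqI iffI)
    fix N assume "N \<in> {M \<in> SLR. coset M \<in> coset ` (A \<inter> SLR)}"
    then obtain M' where N: "N \<in> SLR" "M' \<in> A" "M' \<in> SLR" "coset N = coset M'" by auto
    have "M' \<in> coset N" using N(4) coset_self by blast
    then obtain h where "h \<in> SLZ" "M' = h ** N" by (auto simp: coset_def)
    thus "N \<in> SLR \<inter> T" using N unfolding T_def by auto
  next
    fix N assume "N \<in> SLR \<inter> T"
    then obtain h where h: "N \<in> SLR" "h \<in> SLZ" "h ** N \<in> A" unfolding T_def by auto
    have m: "h ** N \<in> coset N" using h(2) by (auto simp: coset_def)
    hence "coset (h ** N) = coset N" by (rule coset_mem)
    moreover have "h ** N \<in> SLR" using SLR_coset[OF h(1) m] .
    ultimately show "N \<in> {M \<in> SLR. coset M \<in> coset ` (A \<inter> SLR)}"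
      using h by (auto intro!: image_eqI[where x="h ** N"])
  qed
  thus "openin (top_of_set SLR) {M \<in> SLR. coset M \<in> coset ` (A \<inter> SLR)}"
    using \<open>open T\<close> by (auto simp: openin_open)
qed

lemma fin_int_box:
  "finite {v::real^'m::finite. (\<forall>i. v$i \<in> \<int>) \<and> (\<forall>i. \<bar>v$i\<bar> \<le> C)}"
proof -
  let ?P = "PiE UNIV (\<lambda>_::'m. {-\<lceil>C\<rceil>..\<lceil>C\<rceil>})"
  have "{v::real^'m. (\<forall>i. v$i \<in> \<int>) \<and> (\<forall>i. \<bar>v$i\<bar> \<le> C)} \<subseteq> (\<lambda>f. \<chi> i. of_int (f i)) ` ?P"
  proof
    fix v :: "real^'m" assume v: "v \<in> {v. (\<forall>i. v$i \<in> \<int>) \<and> (\<forall>i. \<bar>v$i\<bar> \<le> C)}"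
    have e: "of_int \<lfloor>v$i\<rfloor> = v$i" for i using v by (auto elim: Ints_cases)
    have ab: "\<bar>\<lfloor>v$i\<rfloor>\<bar> \<le> \<lceil>C\<rceil>" for i
    proof -
      have "\<bar>real_of_int \<lfloor>v$i\<rfloor>\<bar> \<le> C" using v e[of i] by auto
      hence "real_of_int \<bar>\<lfloor>v$i\<rfloor>\<bar> \<le> C" by simp
      thus ?thesis using le_of_int_ceiling[of C] of_int_le_iff order_trans by metis
    qed
    have "-\<lceil>C\<rceil> \<le> \<lfloor>v$i\<rfloor> \<and> \<lfloor>v$i\<rfloor> \<le> \<lceil>C\<rceil>" for i using ab[of i] by (simp add: abs_le_iff)
    hence "(\<lambda>i. \<lfloor>v$i\<rfloor>) \<in> ?P" by (auto simp: PiE_iff)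
    moreover have "v = (\<chi> i. of_int (\<lfloor>v$i\<rfloor>))" by (simp add: vec_eq_iff e)
    ultimately show "v \<in> (\<lambda>f. \<chi> i. of_int (f i)) ` ?P" by - (rule rev_image_eqI, assumption, simp)
  qed
  moreover have "finite ?P" by (rule finite_PiE) auto
  ultimately show ?thesis using finite_subset by blast
qed

lemma comp_bound:
  fixes w :: "real^'m::finite" and A :: "real^'k::finite^'m"
  assumes "\<forall>j. \<bar>w$j\<bar> \<le> B"
  shows "\<bar>(w v* A)$i\<bar> \<le> B * (\<Sum>j\<in>UNIV. \<bar>A$j$i\<bar>)"
proof -
  have "\<bar>(w v* A)$i\<bar> = \<bar>\<Sum>j\<in>UNIV. w$j * A$j$i\<bar>" by (simp add: vector_matrix_mult_def)
  also have "\<dots> \<le> (\<Sum>j\<in>UNIV. \<bar>w$j\<bar> * \<bar>A$j$i\<bar>)" by (rule order_trans[OF sum_abs]) (simp add: abs_mult)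
  also have "\<dots> \<le> (\<Sum>j\<in>UNIV. B * \<bar>A$j$i\<bar>)"
    by (rule sum_mono) (use assms in \<open>auto intro: mult_right_mono\<close>)
  finally show ?thesis by (simp add: sum_distrib_left)
qed

lemma fin_lat:
  fixes M :: "'n::finite mat1"
  assumes "det M \<noteq> 0"
  shows "finite {v \<in> int_vecs. \<forall>j. \<bar>(v v* M)$j\<bar> \<le> B}"
proof -
  obtain Mi where Mi: "M ** Mi = mat 1" "Mi ** M = mat 1"
    using assms invertible_det_nz[of M] unfolding invertible_def by auto
  define K where "K = (\<Sum>i\<in>UNIV. \<Sum>j\<in>UNIV. \<bar>Mi$j$i\<bar>)"
  have "{v \<in> int_vecs. \<forall>j. \<bar>(v v* M)$j\<bar> \<le> B} \<subseteq> {v. (\<forall>i. v$i \<in> \<int>) \<and> (\<forall>i. \<bar>v$i\<bar> \<le> B * K)}"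
  proof safe
    fix v :: "real^'n option" and i
    assume v: "v \<in> int_vecs" "\<forall>j. \<bar>(v v* M)$j\<bar> \<le> B"
    show "v$i \<in> \<int>" using v by (auto simp: int_vecs_def)
    have "v = (v v* M) v* Mi" by (simp add: vector_matrix_mul_assoc Mi)
    hence "\<bar>v$i\<bar> \<le> B * (\<Sum>j\<in>UNIV. \<bar>Mi$j$i\<bar>)" using comp_bound[OF v(2), of Mi i] by simp
    also have "\<dots> \<le> B * K"
    proof (rule mult_left_mono)
      show "(\<Sum>j\<in>UNIV. \<bar>Mi$j$i\<bar>) \<le> K" unfolding K_def
        by (rule member_le_sum[where f="\<lambda>i. \<Sum>j\<in>UNIV. \<bar>Mi$j$i\<bar>"]) (auto intro: sum_nonneg)
      show "0 \<le> B" using v(2) by (meson abs_ge_zero order_trans)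
    qed
    finally show "\<bar>v$i\<bar> \<le> B * K" .
  qed
  thus ?thesis using fin_int_box finite_subset by blast
qed



definition Sset :: "(real ^ 'n::finite) set \<Rightarrow> 'n mat1 \<Rightarrow> real ^ 'n \<Rightarrow> real set" where
  "Sset D M t = {y. y > 0 \<and> (\<exists>x. (x, y) \<in> lattice M \<and> x + t \<in> D)}"

definition xv :: "'n::finite mat1 \<Rightarrow> real ^ 'n option \<Rightarrow> real ^ 'n" where
  "xv M v = (\<chi> i. (v v* M) $ Some i)"

lemma Sset_iff: "y \<in> Sset D M t \<longleftrightarrow> (\<exists>v\<in>int_vecs. y = (v v* M)$None \<and> y > 0 \<and> xv M v + t \<in> D)"
  unfolding Sset_def lattice_def split_vec_def xv_def by auto

lemma Ffun_eqI:
  assumes "y0 \<in> Sset D M t" "\<forall>z\<in>Sset D M t. y0 \<le> z"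
  shows "Ffun D M t = ereal y0"
proof -
  have "(THE y. y \<in> Sset D M t \<and> (\<forall>z\<in>Sset D M t. y \<le> z)) = y0"
    using assms by (intro the_equality) (auto intro: antisym)
  thus ?thesis using assms unfolding Ffun_def Sset_def[symmetric] Let_def by auto
qed

lemma Ffun_fin:
  assumes "Ffun D M t < ereal k"
  obtains y0 where "y0 \<in> Sset D M t" "\<forall>z\<in>Sset D M t. y0 \<le> z" "Ffun D M t = ereal y0"
proof -
  have "\<exists>y\<in>Sset D M t. \<forall>z\<in>Sset D M t. y \<le> z"
  proof (rule ccontr)
    assume "\<not> ?thesis"
    hence "Ffun D M t = \<infinity>" unfolding Ffun_def Sset_def[symmetric] Let_def by auto
    thus False using assms by simp
  qed
  thus ?thesis using that Ffun_eqI by blast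
qed

lemma Ffun_min:
  fixes M :: "'n::finite mat1"
  assumes "det M \<noteq> 0" "bounded D" "y1 \<in> Sset D M t"
  shows "\<exists>y0\<in>Sset D M t. y0 \<le> y1 \<and> (\<forall>z\<in>Sset D M t. y0 \<le> z)"
proof -
  obtain a where a: "\<forall>x\<in>D. norm x \<le> a" using assms(2) bounded_iff by blast
  define B where "B = a + norm t + y1"
  define S1 where "S1 = Sset D M t \<inter> {..y1}"
  have "S1 \<subseteq> (\<lambda>v. (v v* M)$None) ` {v \<in> int_vecs. \<forall>j. \<bar>(v v* M)$j\<bar> \<le> B}"
  proof
    fix y assume y: "y \<in> S1"
    then obtain v where v: "v \<in> int_vecs" "y = (v v* M)$None" "y > 0" "xv M v + t \<in> D" "y \<le> y1"
      using y unfolding S1_def by (auto simp: Sset_iff)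
    have na: "norm (xv M v + t) \<le> a" using a v(4) by blast
    have "\<bar>(v v* M)$j\<bar> \<le> B" for j
    proof (cases j)
      case None
      have "\<bar>(v v* M)$j\<bar> = y" using v None by simp
      moreover have "0 \<le> norm (xv M v + t)" "0 \<le> norm t" by simp_all
      ultimately show ?thesis using v na unfolding B_def by linarith
    next
      case (Some i)
      have "\<bar>(v v* M)$j\<bar> = \<bar>xv M v $ i\<bar>" using Some by (simp add: xv_def)
      also have "\<dots> \<le> norm (xv M v)" by (rule component_le_norm_cart)
      also have "\<dots> \<le> norm (xv M v + t) + norm t" by (metis add_diff_cancel norm_triangle_ineq4)
      finally show ?thesis using na v unfolding B_def by linarith
    qed
    thus "y \<in> (\<lambda>v. (v v* M)$None) ` {v \<in> int_vecs. \<forall>j. \<bar>(v v* M)$j\<bar> \<le> B}" using v by blast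
  qed
  hence fin: "finite S1" using fin_lat[OF assms(1)] finite_surj by blast
  have y1: "y1 \<in> S1" using assms(3) unfolding S1_def by auto
  define y0 where "y0 = Min S1"
  have "y0 \<in> S1" unfolding y0_def using fin y1 Min_in by blast
  moreover have "\<forall>z\<in>Sset D M t. y0 \<le> z"
  proof
    fix z assume z: "z \<in> Sset D M t"
    show "y0 \<le> z"
    proof (cases "z \<le> y1")
      case True thus ?thesis using z fin unfolding y0_def S1_def by (auto intro: Min_le)
    next
      case False thus ?thesis using \<open>y0 \<in> S1\<close> unfolding S1_def by auto
    qed
  qed
  ultimately show ?thesis unfolding S1_def by auto
qed

lemma vm_split:
  "(v v* M)$j = ((v - q *\<^sub>R u) v* M)$j + q * (u v* M)$j"
  by (simp add: vector_matrix_mult_def algebra_simps sum.distrib sum_distrib_left sum_subtractf)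

lemma dirichlet_point:
  fixes M :: "'n::finite mat1"
  assumes "det M \<noteq> 0" "r > 0"
  shows "\<exists>v\<in>int_vecs. (v v* M)$None > 0 \<and> (\<forall>i. \<bar>(v v* M)$Some i\<bar> < r)"
proof -
  obtain Mi where Mi: "M ** Mi = mat 1" "Mi ** M = mat 1"
    using assms invertible_det_nz[of M] unfolding invertible_def by auto
  define u where "u = (\<chi> k. Mi$None$k)"
  have uM: "(u v* M)$j = (if j = None then 1 else 0)" for j
  proof -
    have "(u v* M)$j = (Mi ** M)$None$j"
      by (simp add: u_def vector_matrix_mult_def matrix_matrix_mult_def)
    thus ?thesis using Mi(2) by (simp add: mat_def)
  qed
  define K where "K = (\<Sum>j\<in>UNIV. \<Sum>k\<in>UNIV. \<bar>M$k$j\<bar>) + 1"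
  have K1: "K \<ge> 1" unfolding K_def by (simp add: sum_nonneg)
  have Kj: "(\<Sum>k\<in>UNIV. \<bar>M$k$j\<bar>) \<le> K" for j
  proof -
    have "(\<Sum>k\<in>UNIV. \<bar>M$k$j\<bar>) \<le> (\<Sum>j\<in>UNIV. \<Sum>k\<in>UNIV. \<bar>M$k$j\<bar>)"
      by (rule member_le_sum[where f="\<lambda>j. \<Sum>k\<in>UNIV. \<bar>M$k$j\<bar>"]) (auto intro: sum_nonneg)
    thus ?thesis unfolding K_def by linarith
  qed
  define N :: nat where "N = nat \<lceil>K / min 1 r\<rceil> + 1"
  have Npos: "N > 0" unfolding N_def by simp
  have mpos: "min 1 r > 0" using assms by simp
  have "K / min 1 r < real N" unfolding N_def by linarith
  hence "K < real N * min 1 r" using mpos by (simp add: pos_divide_less_eq)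
  hence KN: "K / real N < min 1 r" using Npos by (metis mult.commute of_nat_0_less_iff pos_divide_less_eq)
  define n where "n = card (UNIV :: 'n option set)"
  obtain e where e: "bij_betw e {0..<n} (UNIV :: 'n option set)"
    using ex_bij_betw_nat_finite[of "UNIV :: 'n option set"] unfolding n_def by auto
  obtain q p where qp: "0 < q" "\<And>i. i < n \<Longrightarrow> \<bar>of_int q * (u $ e i) - of_int (p i)\<bar> < 1 / N"
    using Dirichlet_approx_simult[OF Npos, where \<theta>="\<lambda>i. u $ e i" and n=n] by blast
  define v :: "real^'n option" where "v = (\<chi> k. of_int (p (inv_into {0..<n} e k)))"
  have vint: "v \<in> int_vecs" by (auto simp: int_vecs_def v_def)
  define w where "w = v - of_int q *\<^sub>R u"
  have wb: "\<forall>k. \<bar>w$k\<bar> \<le> 1 / N"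
  proof
    fix k
    define i where "i = inv_into {0..<n} e k"
    have "k \<in> e ` {0..<n}" using e by (auto simp: bij_betw_def)
    hence i: "i < n" "e i = k" unfolding i_def
      using inv_into_into[of k e "{0..<n}"] f_inv_into_f[of k e "{0..<n}"] by auto
    have "\<bar>w$k\<bar> = \<bar>of_int q * (u $ e i) - of_int (p i)\<bar>"
      using i unfolding w_def v_def i_def by simp
    thus "\<bar>w$k\<bar> \<le> 1 / N" using qp(2)[OF i(1)] by simp
  qed
  have err: "\<bar>(w v* M)$j\<bar> < min 1 r" for j
  proof -
    have "\<bar>(w v* M)$j\<bar> \<le> 1 / N * (\<Sum>k\<in>UNIV. \<bar>M$k$j\<bar>)" by (rule comp_bound[OF wb])
    also have "\<dots> \<le> 1 / N * K" by (rule mult_left_mono[OF Kj]) simp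
    also have "\<dots> = K / N" by simp
    finally show ?thesis using KN by linarith
  qed
  have vs: "(v v* M)$j = (w v* M)$j + of_int q * (if j = None then 1 else 0)" for j
    using vm_split[of v M j "of_int q" u] unfolding w_def uM .
  have "(v v* M)$None > 0"
  proof -
    have "real_of_int q \<ge> 1" using qp(1) by simp
    moreover have "\<bar>(w v* M)$None\<bar> < 1" using err[of None] by simp
    ultimately show ?thesis using vs[of None] by simp
  qed
  moreover have "\<bar>(v v* M)$Some i\<bar> < r" for i using vs[of "Some i"] err[of "Some i"] by simp
  ultimately show ?thesis using vint by blast
qed

lemma tendsto_vm:
  fixes M :: "'n::finite mat1"
  shows "((\<lambda>p. (v v* fst p) $ j) \<longlongrightarrow> (v v* M) $ j) (nhds (M, t :: 'b::metric_space))"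
proof -
  have e: "(\<lambda>p. (v v* fst p) $ j) = (\<lambda>p::'n::finite mat1 \<times> 'b. \<Sum>i\<in>UNIV. v$i * fst p $ i $ j)"
    by (simp add: vector_matrix_mult_def)
  have "isCont (\<lambda>p::'n mat1 \<times> 'b. \<Sum>i\<in>UNIV. v$i * fst p $ i $ j) (M, t)"
    by (intro continuous_intros)
  thus ?thesis unfolding e tendsto_nhds_iff isCont_def by (simp add: vector_matrix_mult_def)
qed

lemma tendsto_xv:
  fixes M :: "'n::finite mat1" and t :: "real^'n"
  shows "((\<lambda>p. xv (fst p) v + (snd p - s)) \<longlongrightarrow> xv M v + (t - s)) (nhds (M, t))"
proof -
  have 1: "((\<lambda>x. \<chi> i. (v v* fst x) $ Some i) \<longlongrightarrow> (\<chi> i. (v v* M) $ Some i)) (nhds (M, t))"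
    by (rule tendsto_vec_lambda) (rule tendsto_vm)
  have "isCont (\<lambda>p::('n mat1) \<times> (real^'n). snd p) (M, t)"
    by (intro continuous_intros)
  hence 2: "(snd \<longlongrightarrow> t) (nhds (M, t))"
    by (simp add: tendsto_nhds_iff isCont_def)
  show ?thesis unfolding xv_def
    by (rule tendsto_add[OF 1 tendsto_diff[OF 2 tendsto_const]])
qed



lemma vm_diff:
  fixes M M' :: "real^'m::finite^'k::finite"
  shows "(v v* M) = (v v* M') + (v v* (M - M'))"
  unfolding vec_eq_iff
proof
  fix i
  have "(\<Sum>j\<in>UNIV. v$j * (M - M')$j$i) = (\<Sum>j\<in>UNIV. v$j * M$j$i - v$j * M'$j$i)"
    by (rule sum.cong) (simp_all add: algebra_simps)
  thus "(v v* M)$i = (v v* M' + v v* (M - M'))$i"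
    by (simp add: vector_matrix_mult_def sum_subtractf)
qed

lemma sum_const_bound:
  fixes f :: "'a::finite \<Rightarrow> real"
  assumes "\<forall>j. f j \<le> c" shows "(\<Sum>j\<in>UNIV. f j) \<le> real CARD('a) * c"
  using sum_bounded_above[of UNIV f c] assms by auto

lemma bound_v:
  fixes M M' Mi :: "'n::finite mat1"
  assumes Mi: "M ** Mi = mat 1"
    and d: "\<forall>j k. \<bar>(M - M')$j$k\<bar> \<le> \<delta>"
    and dK: "\<delta> * real CARD('n option) * KS \<le> 1/2"
    and KS: "\<forall>i. (\<Sum>k\<in>UNIV. \<bar>Mi$k$i\<bar>) \<le> KS"
    and b: "\<forall>j. \<bar>(v v* M')$j\<bar> \<le> b"
  shows "\<forall>i. \<bar>v$i\<bar> \<le> 2 * b * KS"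
proof -
  define n where "n = real CARD('n option)"
  have b0: "b \<ge> 0" using b by (meson abs_ge_zero order_trans)
  have d0: "\<delta> \<ge> 0" using d by (meson abs_ge_zero order_trans)
  have KS0: "KS \<ge> 0" using KS by (meson order_trans sum_nonneg abs_ge_zero)
  define mv where "mv = Max (range (\<lambda>i. \<bar>v$i\<bar>))"
  have mv: "\<bar>v$i\<bar> \<le> mv" for i unfolding mv_def by (rule Max_ge) auto
  have "mv \<in> range (\<lambda>i. \<bar>v$i\<bar>)" unfolding mv_def by (rule Max_in) auto
  then obtain i0 where i0: "mv = \<bar>v$i0\<bar>" by auto
  have mv0: "mv \<ge> 0" using mv[of i0] by simp
  have ve: "v = (v v* M') v* Mi + (v v* (M - M')) v* Mi"
  proof -
    have "v = (v v* M) v* Mi" by (simp add: vector_matrix_mul_assoc Mi)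
    also have "\<dots> = (v v* M') v* Mi + (v v* (M - M')) v* Mi"
      by (subst vm_diff[of v M M']) (simp add: vec_eq_iff vector_matrix_mult_def algebra_simps sum.distrib)
    finally show ?thesis .
  qed
  have e1: "\<bar>(v v* (M - M'))$k\<bar> \<le> mv * (n * \<delta>)" for k
  proof -
    have "\<bar>(v v* (M - M'))$k\<bar> \<le> mv * (\<Sum>j\<in>UNIV. \<bar>(M - M')$j$k\<bar>)"
      by (rule comp_bound) (use mv in auto)
    moreover have "(\<Sum>j\<in>UNIV. \<bar>(M - M')$j$k\<bar>) \<le> n * \<delta>" unfolding n_def
      by (rule sum_const_bound) (use d in auto)
    ultimately show ?thesis using mult_left_mono[OF _ mv0] order_trans by blast
  qed
  have "\<bar>v$i\<bar> \<le> b * KS + mv / 2" for i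
  proof -
    have "\<bar>v$i\<bar> \<le> \<bar>((v v* M') v* Mi)$i\<bar> + \<bar>((v v* (M - M')) v* Mi)$i\<bar>"
      by (subst ve) simp
    also have "\<bar>((v v* M') v* Mi)$i\<bar> \<le> b * KS"
      using order_trans[OF comp_bound[OF b, of Mi i] mult_left_mono[OF KS[rule_format] b0]] .
    also have "\<bar>((v v* (M - M')) v* Mi)$i\<bar> \<le> mv * (n * \<delta>) * KS"
    proof -
      have "\<bar>((v v* (M - M')) v* Mi)$i\<bar> \<le> mv * (n * \<delta>) * (\<Sum>k\<in>UNIV. \<bar>Mi$k$i\<bar>)"
        by (rule comp_bound) (use e1 in auto)
      also have "\<dots> \<le> mv * (n * \<delta>) * KS"
        using KS mv0 d0 by (intro mult_left_mono) (auto simp: n_def)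
      finally show ?thesis .
    qed
    also have "mv * (n * \<delta>) * KS \<le> mv / 2"
      using mult_left_mono[OF dK[folded n_def] mv0] by (simp add: algebra_simps)
    finally show ?thesis by simp
  qed
  hence "mv \<le> b * KS + mv / 2" using i0 by simp
  hence "mv \<le> 2 * b * KS" by simp
  thus ?thesis using mv order_trans by blast
qed

lemma split_vec_zero: "split_vec w = 0 \<Longrightarrow> w = 0"
  unfolding split_vec_def zero_prod_def
  by (simp add: vec_eq_iff) (metis not_None_eq)

lemma interior_K:
  fixes t :: "real^'n::finite"
  assumes "z \<in> interior ((\<lambda>x. x - t) ` D \<times> {0..\<kappa>::real})"
  shows "fst z + t \<in> D" "snd z > 0" "snd z < \<kappa>"
proof -
  have z: "fst z \<in> interior ((\<lambda>x. x - t) ` D)" "snd z \<in> {0<..<\<kappa>}"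
    using assms unfolding interior_Times by (auto simp: mem_Times_iff)
  hence "fst z \<in> (\<lambda>x. x - t) ` D" using interior_subset by blast
  then obtain x where "x \<in> D" "fst z = x - t" by auto
  thus "fst z + t \<in> D" by simp
  show "snd z > 0" "snd z < \<kappa>" using z by auto
qed

lemma eventually_open:
  assumes "(f \<longlongrightarrow> l) F" "open S" "l \<in> S"
  shows "eventually (\<lambda>x. f x \<in> S) F"
  using topological_tendstoD[OF assms] .



lemma local_bound:
  fixes M :: "'n::finite mat1" and t :: "real^'n"
  assumes bD: "bounded D" and MS: "M \<in> SLR" and tD: "t \<in> interior D"
  shows "\<exists>A B \<kappa>. open A \<and> open B \<and> M \<in> A \<and> t \<in> B \<and> \<kappa> > 0 \<and>
           (\<forall>M'\<in>A \<inter> SLR. \<forall>t'\<in>B. Ffun D M' t' < ereal \<kappa>)"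
proof -
  have detM: "det M \<noteq> 0" using MS by (simp add: SLR_def)
  obtain r where r: "r > 0" "ball t r \<subseteq> interior D"
    using tD open_interior open_contains_ball by blast
  define r' where "r' = r / (real CARD('n) + 1)"
  have r': "r' > 0" using r by (simp add: r'_def)
  obtain v0 where v0: "v0 \<in> int_vecs" "(v0 v* M)$None > 0" "\<forall>i. \<bar>(v0 v* M)$Some i\<bar> < r'"
    using dirichlet_point[OF detM r'] by blast
  have "norm (xv M v0) \<le> (\<Sum>i\<in>UNIV. \<bar>xv M v0 $ i\<bar>)" by (rule norm_le_l1_cart)
  also have "\<dots> \<le> real CARD('n) * r'"
    by (rule sum_const_bound) (use v0 in \<open>auto simp: xv_def less_imp_le\<close>)
  also have "\<dots> < r" unfolding r'_def using r by (simp add: field_simps)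
  finally have nx: "norm (xv M v0) < r" .
  have "dist t (xv M v0 + t) < r" using nx by (simp add: dist_norm)
  hence xin: "xv M v0 + t \<in> interior D" using r by auto
  define y0 where "y0 = (v0 v* M)$None"
  have tl: "((\<lambda>p. (xv (fst p) v0 + (snd p - 0), (v0 v* fst p)$None)) \<longlongrightarrow> (xv M v0 + (t - 0), y0)) (nhds (M, t))"
    unfolding y0_def by (intro tendsto_Pair tendsto_xv tendsto_vm)
  have "eventually (\<lambda>p. (xv (fst p) v0 + (snd p - 0), (v0 v* fst p)$None) \<in> interior D \<times> {0<..<y0+1}) (nhds (M, t))"
    by (rule eventually_open[OF tl]) (use xin v0 in \<open>auto simp: y0_def intro!: open_Times\<close>)
  then obtain S where S: "open S" "(M, t) \<in> S"
    "\<forall>p\<in>S. (xv (fst p) v0 + (snd p - 0), (v0 v* fst p)$None) \<in> interior D \<times> {0<..<y0+1}"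
    unfolding eventually_nhds by blast
  obtain A B where AB: "open A" "open B" "(M, t) \<in> A \<times> B" "A \<times> B \<subseteq> S"
    using open_prod_elim[OF S(1,2)] by blast
  show ?thesis
  proof (intro exI conjI ballI)
    show "open A" "open B" using AB by auto
    show "M \<in> A" "t \<in> B" using AB by auto
    show "y0 + 1 > 0" using v0 by (simp add: y0_def)
    fix M' t' assume M': "M' \<in> A \<inter> SLR" and t': "t' \<in> B"
    hence "(M', t') \<in> S" using AB by auto
    hence hp: "xv M' v0 + t' \<in> interior D" "0 < (v0 v* M')$None" "(v0 v* M')$None < y0 + 1"
      using S(3) by auto
    have "(v0 v* M')$None \<in> Sset D M' t'" unfolding Sset_iff
      using v0(1) hp interior_subset by blast
    moreover have "det M' \<noteq> 0" using M' by (simp add: SLR_def)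
    ultimately obtain ys where ys: "ys \<in> Sset D M' t'" "ys \<le> (v0 v* M')$None" "\<forall>z\<in>Sset D M' t'. ys \<le> z"
      using Ffun_min[OF _ bD] by blast
    have "Ffun D M' t' = ereal ys" using Ffun_eqI ys by blast
    thus "Ffun D M' t' < ereal (y0 + 1)" using ys(2) hp(3) by simp
  qed
qed



lemma local_cont:
  fixes M :: "'n::finite mat1" and t :: "real^'n" and \<kappa> :: real
  assumes bD: "bounded D" and MS: "M \<in> SLR" and Fk: "Ffun D M t < ereal \<kappa>"
    and fr: "(lattice M - {0}) \<inter> frontier ((\<lambda>x. x - t) ` D \<times> {0..\<kappa>}) = {}"
    and V: "open V" "Ffun D M t \<in> V"
  shows "\<exists>A B. open A \<and> open B \<and> M \<in> A \<and> t \<in> B \<and> (\<forall>M'\<in>A \<inter> SLR. \<forall>t'\<in>B. Ffun D M' t' \<in> V)"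
proof -
  define K where "K = (\<lambda>x. x - t) ` D \<times> {0..\<kappa>}"
  define S0 where "S0 = Sset D M t"
  obtain y0 where y0: "y0 \<in> S0" "\<forall>z\<in>S0. y0 \<le> z" "Ffun D M t = ereal y0"
    using Ffun_fin[OF Fk] unfolding S0_def by blast
  have y0k: "y0 < \<kappa>" using Fk y0(3) by simp
  obtain v0 where v0: "v0 \<in> int_vecs" "y0 = (v0 v* M)$None" "y0 > 0" "xv M v0 + t \<in> D"
    using y0(1) unfolding S0_def Sset_iff by blast
  have "((\<lambda>z. ereal z) \<longlongrightarrow> ereal y0) (nhds y0)"
    unfolding tendsto_nhds_iff using tendsto_ereal[OF tendsto_ident_at[of y0 UNIV]] by simp
  hence "eventually (\<lambda>z. ereal z \<in> V) (nhds y0)"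
    using eventually_open V y0(3) by metis
  then obtain \<epsilon> where \<epsilon>: "\<epsilon> > 0" "\<forall>z. dist z y0 < \<epsilon> \<longrightarrow> ereal z \<in> V"
    unfolding eventually_nhds_metric by blast
  define e where "e = min \<epsilon> (\<kappa> - y0)"
  have e: "e > 0" "e \<le> \<epsilon>" "y0 + e \<le> \<kappa>" using \<epsilon> y0k by (auto simp: e_def)
  obtain a where a: "\<forall>x\<in>D. norm x \<le> a" using bD bounded_iff by blast
  have a0: "a \<ge> 0" using a v0(4) by (meson norm_ge_zero order_trans)
  have detM: "det M \<noteq> 0" using MS by (simp add: SLR_def)
  obtain Mi where Mi: "M ** Mi = mat 1" "Mi ** M = mat 1"
    using detM invertible_det_nz[of M] unfolding invertible_def by auto
  define KS where "KS = (\<Sum>i\<in>UNIV. \<Sum>k\<in>UNIV. \<bar>Mi$k$i\<bar>) + 1"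
  have KS: "\<forall>i. (\<Sum>k\<in>UNIV. \<bar>Mi$k$i\<bar>) \<le> KS"
  proof
    fix i
    have "(\<Sum>k\<in>UNIV. \<bar>Mi$k$i\<bar>) \<le> (\<Sum>i\<in>UNIV. \<Sum>k\<in>UNIV. \<bar>Mi$k$i\<bar>)"
      by (rule member_le_sum[where f="\<lambda>i. \<Sum>k\<in>UNIV. \<bar>Mi$k$i\<bar>"]) (auto intro: sum_nonneg)
    thus "(\<Sum>k\<in>UNIV. \<bar>Mi$k$i\<bar>) \<le> KS" unfolding KS_def by linarith
  qed
  have "0 \<le> (\<Sum>i\<in>UNIV. \<Sum>k\<in>UNIV. \<bar>Mi$k$i\<bar>)" by (intro sum_nonneg) simp
  hence KS0: "KS > 0" unfolding KS_def by linarith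
  define \<delta> where "\<delta> = 1 / (2 * real CARD('n option) * KS)"
  have \<delta>0: "\<delta> > 0" using KS0 by (simp add: \<delta>_def)
  have \<delta>K: "\<delta> * real CARD('n option) * KS \<le> 1/2" using KS0 by (simp add: \<delta>_def)
  define b where "b = a + norm t + 1 + \<kappa>"
  define V0 :: "(real^'n option) set" where "V0 = {v \<in> int_vecs. \<forall>i. \<bar>v$i\<bar> \<le> 2 * b * KS}"
  have finV0: "finite V0"
    by (rule finite_subset[OF _ fin_int_box[of "2 * b * KS"]]) (auto simp: V0_def int_vecs_def)
  define \<phi> where "\<phi> v p = (xv (fst p) v + (snd p - t), (v v* fst p)$None)" for v and p :: "'n mat1 \<times> (real^'n)"
  have t\<phi>: "(\<phi> v \<longlongrightarrow> split_vec (v v* M)) (nhds (M, t))" for v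
  proof -
    have "split_vec (v v* M) = (xv M v + (t - t), (v v* M)$None)" by (simp add: split_vec_def xv_def)
    thus ?thesis unfolding \<phi>_def[abs_def] by (simp only:) (intro tendsto_Pair tendsto_xv tendsto_vm)
  qed
  have inK: "\<phi> v p \<in> K" if "(v v* fst p)$None > 0" "xv (fst p) v + snd p \<in> D" "(v v* fst p)$None \<le> \<kappa>" for v p
  proof -
    have "xv (fst p) v + (snd p - t) = (xv (fst p) v + snd p) - t" by simp
    hence "xv (fst p) v + (snd p - t) \<in> (\<lambda>x. x - t) ` D" using that(2) by (metis image_eqI)
    thus ?thesis using that unfolding \<phi>_def K_def by auto
  qed
  have nf: "split_vec (v v* M) \<notin> frontier K" if "v \<in> int_vecs" "v \<noteq> 0" for v
  proof
    assume a1: "split_vec (v v* M) \<in> frontier K"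
    have "split_vec (v v* M) \<in> lattice M" using that(1) unfolding lattice_def by blast
    moreover have "split_vec (v v* M) \<noteq> 0"
    proof
      assume "split_vec (v v* M) = 0"
      hence "v v* M = 0" by (rule split_vec_zero)
      hence "(v v* M) v* Mi = 0" by simp
      thus False using that(2) by (simp add: vector_matrix_mul_assoc Mi)
    qed
    ultimately show False using a1 fr unfolding K_def by blast
  qed
  have Q: "\<forall>v\<in>V0. eventually (\<lambda>p. (v v* fst p)$None > 0 \<and> xv (fst p) v + snd p \<in> D \<and> (v v* fst p)$None \<le> \<kappa>
             \<longrightarrow> (v v* fst p)$None > y0 - e) (nhds (M, t))"
  proof
    fix v assume vV: "v \<in> V0"
    show "eventually (\<lambda>p. (v v* fst p)$None > 0 \<and> xv (fst p) v + snd p \<in> D \<and> (v v* fst p)$None \<le> \<kappa>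
             \<longrightarrow> (v v* fst p)$None > y0 - e) (nhds (M, t))"
    proof (cases "v = 0")
      case True thus ?thesis by simp
    next
      case False
      have vi: "v \<in> int_vecs" using vV by (simp add: V0_def)
      have nfr: "split_vec (v v* M) \<notin> frontier K" using nf[OF vi False] .
      show ?thesis
      proof (cases "split_vec (v v* M) \<in> interior K")
        case True
        have "fst (split_vec (v v* M)) + t \<in> D" "snd (split_vec (v v* M)) > 0"
          using interior_K[OF True[unfolded K_def]] by auto
        hence "(v v* M)$None \<in> S0" unfolding S0_def Sset_iff using vi
          by (auto simp: split_vec_def xv_def)
        hence "y0 - e < (v v* M)$None" using y0(2) e by fastforce
        hence "eventually (\<lambda>p. y0 - e < (v v* fst p)$None) (nhds (M, t))"
          by (rule order_tendstoD(1)[OF tendsto_vm])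
        thus ?thesis by (rule eventually_mono) auto
      next
        case False
        hence "split_vec (v v* M) \<in> - closure K" using nfr by (auto simp: frontier_def)
        hence "eventually (\<lambda>p. \<phi> v p \<in> - closure K) (nhds (M, t))"
          by (intro eventually_open[OF t\<phi>]) auto
        thus ?thesis by (rule eventually_mono) (use inK closure_subset in blast)
      qed
    qed
  qed
  have sv0: "split_vec (v0 v* M) \<in> K"
  proof -
    have "xv M v0 = (xv M v0 + t) - t" by simp
    hence "xv M v0 \<in> (\<lambda>x. x - t) ` D" using v0(4) by (metis image_eqI)
    thus ?thesis using v0 y0k unfolding K_def by (auto simp: split_vec_def xv_def)
  qed
  have "v0 \<noteq> 0" using v0(2,3) by auto
  hence "split_vec (v0 v* M) \<in> interior K"
    using nf[OF v0(1)] sv0 closure_subset by (auto simp: frontier_def)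
  hence E0: "eventually (\<lambda>p. \<phi> v0 p \<in> interior K) (nhds (M, t))"
    by (intro eventually_open[OF t\<phi>]) auto
  have E1: "eventually (\<lambda>p. (v0 v* fst p)$None < y0 + e) (nhds (M, t))"
    by (rule order_tendstoD(2)[OF tendsto_vm]) (use v0 e in simp)
  have E2: "eventually (\<lambda>p. dist p (M, t) < min \<delta> 1) (nhds (M, t))"
    unfolding eventually_nhds_metric using \<delta>0 by (intro exI[of _ "min \<delta> 1"]) auto
  note E3 = eventually_ball_finite[OF finV0 Q]
  have "eventually (\<lambda>p. \<phi> v0 p \<in> interior K \<and> (v0 v* fst p)$None < y0 + e \<and> dist p (M, t) < min \<delta> 1 \<and>
     (\<forall>v\<in>V0. (v v* fst p)$None > 0 \<and> xv (fst p) v + snd p \<in> D \<and> (v v* fst p)$None \<le> \<kappa>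
             \<longrightarrow> (v v* fst p)$None > y0 - e)) (nhds (M, t))"
    using E0 E1 E2 E3 by (intro eventually_conj)
  then obtain S where S: "open S" "(M, t) \<in> S" "\<forall>p\<in>S. \<phi> v0 p \<in> interior K \<and> (v0 v* fst p)$None < y0 + e \<and> dist p (M, t) < min \<delta> 1 \<and>
     (\<forall>v\<in>V0. (v v* fst p)$None > 0 \<and> xv (fst p) v + snd p \<in> D \<and> (v v* fst p)$None \<le> \<kappa>
             \<longrightarrow> (v v* fst p)$None > y0 - e)"
    unfolding eventually_nhds by blast
  obtain A B where AB: "open A" "open B" "(M, t) \<in> A \<times> B" "A \<times> B \<subseteq> S"
    using open_prod_elim[OF S(1,2)] by blast
  show ?thesis
  proof (intro exI conjI ballI)
    show "open A" "open B" using AB by auto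
    show "M \<in> A" "t \<in> B" using AB by auto
    fix M' t' assume M': "M' \<in> A \<inter> SLR" and t': "t' \<in> B"
    hence "(M', t') \<in> S" using AB by auto
    hence P: "\<phi> v0 (M', t') \<in> interior K" "(v0 v* M')$None < y0 + e" "dist (M', t') (M, t) < min \<delta> 1"
      "\<forall>v\<in>V0. (v v* M')$None > 0 \<and> xv M' v + t' \<in> D \<and> (v v* M')$None \<le> \<kappa> \<longrightarrow> (v v* M')$None > y0 - e"
      using S(3) by auto
    have P0: "xv M' v0 + (t' - t) + t \<in> D" "(v0 v* M')$None > 0"
      using interior_K[OF P(1)[unfolded K_def]] by (auto simp: \<phi>_def)
    hence "(v0 v* M')$None \<in> Sset D M' t'" unfolding Sset_iff using v0(1)
      by (auto simp: algebra_simps)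
    moreover have "det M' \<noteq> 0" using M' by (simp add: SLR_def)
    ultimately obtain ys where ys: "ys \<in> Sset D M' t'" "ys \<le> (v0 v* M')$None" "\<forall>z\<in>Sset D M' t'. ys \<le> z"
      using Ffun_min[OF _ bD] by blast
    have Fe: "Ffun D M' t' = ereal ys" using Ffun_eqI ys by blast
    obtain v where v: "v \<in> int_vecs" "ys = (v v* M')$None" "ys > 0" "xv M' v + t' \<in> D"
      using ys(1) unfolding Sset_iff by blast
    have dM: "dist M' M < \<delta>" and dt: "dist t' t < 1"
      using P(3) dist_fst_le[of "(M', t')" "(M, t)"] dist_snd_le[of "(M', t')" "(M, t)"] by auto
    have ent: "\<forall>j k. \<bar>(M - M')$j$k\<bar> \<le> \<delta>"
    proof (intro allI)
      fix j k
      have "\<bar>(M - M')$j$k\<bar> \<le> norm ((M - M')$j)" by (rule component_le_norm_cart)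
      also have "\<dots> \<le> norm (M - M')" by (rule Finite_Cartesian_Product.norm_nth_le)
      also have "\<dots> = dist M' M" by (simp add: dist_norm norm_minus_commute)
      finally show "\<bar>(M - M')$j$k\<bar> \<le> \<delta>" using dM by simp
    qed
    have ysk: "ys < y0 + e" using ys(2) P(2) by simp
    have bnd: "\<forall>j. \<bar>(v v* M')$j\<bar> \<le> b"
    proof
      fix j show "\<bar>(v v* M')$j\<bar> \<le> b"
      proof (cases j)
        case None
        have "\<bar>(v v* M')$j\<bar> = ys" using v None by simp
        moreover have "0 \<le> norm t" by simp
        ultimately show ?thesis using ysk e a0 unfolding b_def by linarith
      next
        case (Some i)
        have "\<bar>(v v* M')$j\<bar> = \<bar>xv M' v $ i\<bar>" using Some by (simp add: xv_def)
        also have "\<dots> \<le> norm (xv M' v)" by (rule component_le_norm_cart)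
        also have "\<dots> \<le> norm (xv M' v + t') + norm t'" by (metis add_diff_cancel norm_triangle_ineq4)
        finally have "\<bar>(v v* M')$j\<bar> \<le> norm (xv M' v + t') + norm t'" .
        moreover have "norm t' \<le> norm t + 1" using dt norm_triangle_ineq2[of t' t] by (simp add: dist_norm)
        moreover have "norm (xv M' v + t') \<le> a" using a v(4) by blast
        moreover have "0 \<le> \<kappa>" using y0k v0(3) by simp
        ultimately show ?thesis unfolding b_def by linarith
      qed
    qed
    have "\<forall>i. \<bar>v$i\<bar> \<le> 2 * b * KS" by (rule bound_v[OF Mi(1) ent \<delta>K KS bnd])
    hence "v \<in> V0" using v(1) by (simp add: V0_def)
    hence "ys > y0 - e" using P(4) v ysk e by auto
    hence "dist ys y0 < \<epsilon>" using ysk e by (simp add: dist_real_def abs_less_iff)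
    thus "Ffun D M' t' \<in> V" using \<epsilon> Fe by simp
  qed
qed



lemma topspace_quot_top: "topspace quot_top \<subseteq> cosets"
  unfolding topspace_def using openin_quot_top by blast

lemma openin_U:
  assumes "open A" "open B"
  shows "openin (prod_topology quot_top (top_of_set (interior D))) (coset ` (A \<inter> SLR) \<times> (B \<inter> interior D))"
proof -
  have "openin (top_of_set (interior D)) (B \<inter> interior D)"
    using assms(2) by (auto simp: openin_open)
  thus ?thesis using openin_quot_image[OF assms(1)] by (simp add: openin_prod_Times_iff)
qed

theorem proposition2p2:
  fixes D :: "(real ^ 'n::finite) set"
    and C :: "(('n mat1 set) \<times> (real ^ 'n)) set"
  assumes "bounded D"
    and "interior D \<noteq> {}"
    and "compactin (prod_topology quot_top (top_of_set (interior D))) C"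
  shows "\<exists>\<kappa>::real. \<kappa> > 0 \<and>
     (\<forall>M t. M \<in> SLR \<and> (coset M, t) \<in> C \<longrightarrow> Ffun D M t < ereal \<kappa>) \<and>
     (\<forall>M t. M \<in> SLR \<and> (coset M, t) \<in> C \<and>
        (lattice M - {0}) \<inter> frontier ((\<lambda>x. x - t) ` D \<times> {0..\<kappa>}) = {} \<longrightarrow>
        continuous_at_pt (prod_topology quot_top (top_of_set (interior D))) (Fq D) (coset M, t))"
proof -
  define X :: "('n mat1 set \<times> (real^'n)) topology" where "X = prod_topology quot_top (top_of_set (interior D))"
  have CX: "C \<subseteq> cosets \<times> interior D"
    using assms(3) topspace_quot_top unfolding compactin_def by force
  have loc: "\<forall>p\<in>C. \<exists>U k. openin X U \<and> p \<in> U \<and> k > 0 \<and>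
              (\<forall>(M::'n mat1) t. M \<in> SLR \<and> (coset M, t) \<in> U \<longrightarrow> Ffun D M t < ereal k)"
  proof
    fix p assume p: "p \<in> C"
    then obtain M0 t0 where p0: "p = (coset M0, t0)" "M0 \<in> SLR" "t0 \<in> interior D"
      using CX by (cases p) (auto simp: cosets_def)
    obtain A B k where ABk: "open A" "open B" "M0 \<in> A" "t0 \<in> B" "k > 0"
      "\<forall>M'\<in>A \<inter> SLR. \<forall>t'\<in>B. Ffun D M' t' < ereal k"
      using local_bound[OF assms(1) p0(2,3)] by blast
    show "\<exists>U k. openin X U \<and> p \<in> U \<and> k > 0 \<and>
              (\<forall>(M::'n mat1) t. M \<in> SLR \<and> (coset M, t) \<in> U \<longrightarrow> Ffun D M t < ereal k)"
    proof (intro exI conjI allI impI)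
      show "openin X (coset ` (A \<inter> SLR) \<times> (B \<inter> interior D))"
        unfolding X_def by (rule openin_U[OF ABk(1,2)])
      show "p \<in> coset ` (A \<inter> SLR) \<times> (B \<inter> interior D)" using p0 ABk by auto
      show "k > 0" by fact
      fix M t assume Mt: "M \<in> SLR \<and> (coset M, t) \<in> coset ` (A \<inter> SLR) \<times> (B \<inter> interior D)"
      then obtain M' where M': "M' \<in> A \<inter> SLR" "coset M = coset M'" "t \<in> B" by auto
      have "Ffun D M t = Ffun D M' t" by (rule Ffun_lattice[OF lattice_coset_eq[OF M'(2)]])
      thus "Ffun D M t < ereal k" using ABk(6) M' by simp
    qed
  qed
  then obtain Uf kf where Ukf: "\<forall>p\<in>C. openin X (Uf p) \<and> p \<in> Uf p \<and> kf p > 0 \<and>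
              (\<forall>(M::'n mat1) t. M \<in> SLR \<and> (coset M, t) \<in> Uf p \<longrightarrow> Ffun D M t < ereal (kf p))"
    by metis
  obtain F where F: "finite F" "F \<subseteq> Uf ` C" "C \<subseteq> \<Union>F"
    using assms(3) Ukf unfolding compactin_def X_def[symmetric] by (metis (no_types, lifting) UN_I imageE subsetI)
  obtain P where P: "P \<subseteq> C" "finite P" "F = Uf ` P"
    using finite_subset_image[OF F(1,2)] by blast
  define \<kappa> where "\<kappa> = 1 + (\<Sum>p\<in>P. kf p)"
  have kpos: "\<forall>p\<in>P. kf p > 0" using P Ukf by auto
  have kle: "kf p \<le> \<kappa>" if "p \<in> P" for p
  proof -
    have "kf p \<le> (\<Sum>p\<in>P. kf p)"
      by (rule member_le_sum) (use that kpos P in \<open>auto intro: less_imp_le\<close>)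
    thus ?thesis unfolding \<kappa>_def by simp
  qed
  have "0 \<le> (\<Sum>p\<in>P. kf p)" using kpos by (intro sum_nonneg) (auto intro: less_imp_le)
  hence k0: "\<kappa> > 0" unfolding \<kappa>_def by linarith
  have part1: "\<forall>M t. M \<in> SLR \<and> (coset M, t) \<in> C \<longrightarrow> Ffun D M t < ereal \<kappa>"
  proof (intro allI impI)
    fix M t assume Mt: "M \<in> SLR \<and> (coset M, t) \<in> C"
    then obtain p where p: "p \<in> P" "(coset M, t) \<in> Uf p" using F(3) P(3) by auto
    have "Ffun D M t < ereal (kf p)" using Ukf p P(1) Mt by blast
    also have "\<dots> \<le> ereal \<kappa>" using kle[OF p(1)] by simp
    finally show "Ffun D M t < ereal \<kappa>" .
  qed
  have part2: "continuous_at_pt X (Fq D) (coset M, t)"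
    if Mt: "M \<in> SLR" "(coset M, t) \<in> C" "(lattice M - {0}) \<inter> frontier ((\<lambda>x. x - t) ` D \<times> {0..\<kappa>}) = {}" for M t
    unfolding continuous_at_pt_def
  proof (intro allI impI)
    fix V assume V: "open V \<and> Fq D (coset M, t) \<in> V"
    have tD: "t \<in> interior D" using Mt(2) CX by auto
    have Fk: "Ffun D M t < ereal \<kappa>" using part1 Mt by blast
    obtain A B where AB: "open A" "open B" "M \<in> A" "t \<in> B" "\<forall>M'\<in>A \<inter> SLR. \<forall>t'\<in>B. Ffun D M' t' \<in> V"
      using local_cont[OF assms(1) Mt(1) Fk Mt(3)] V Fq_coset by metis
    show "\<exists>U. openin X U \<and> (coset M, t) \<in> U \<and> (\<forall>q\<in>U. Fq D q \<in> V)"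
    proof (intro exI conjI ballI)
      show "openin X (coset ` (A \<inter> SLR) \<times> (B \<inter> interior D))"
        unfolding X_def by (rule openin_U[OF AB(1,2)])
      show "(coset M, t) \<in> coset ` (A \<inter> SLR) \<times> (B \<inter> interior D)" using AB Mt tD by auto
      fix q assume "q \<in> coset ` (A \<inter> SLR) \<times> (B \<inter> interior D)"
      then obtain M' t' where q: "q = (coset M', t')" "M' \<in> A \<inter> SLR" "t' \<in> B" by auto
      have "Ffun D M' t' \<in> V" using AB(5) q(2,3) by blast
      thus "Fq D q \<in> V" using q(1) by (simp add: Fq_coset)
    qed
  qed
  show ?thesis using k0 part1 part2 unfolding X_def by blast
qed

end
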